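(* Let $f(X)=\sum_{a=(h_1,\dots,h_N)\in\mathcal{A}} w_a\sum_{\biguplus_{i=1}^N X_i=X}\prod_{i=1}^N f_{h_i}(X_i)$ be a multi-Bernoulli mixture. For Bernoulli densities $[g_j]=(g_1,\dots,g_N)$ and, for each $a\in\mathcal{A}$, a probability distribution $q_a$ on $\Pi_N$ (i.e. $q_a(\pi)\ge 0$, $\sum_{\pi\in\Pi_N}q_a(\pi)=1$), define the zero-temperature objective $$\tilde J_0\big([g_j],[q_a(\pi)]\big)=-\sum_{a\in\mathcal{A},\pi\in\Pi_N} w_a q_a(\pi)\sum_{i=1}^N\int f_{h_i}(X)\log g_{\pi(i)}(X)\,\delta X .$$ Then minimising $\tilde J_0$ jointly over $[g_j]$ (Bernoulli densities, $g_j\ge0$, $\int g_j(X)\delta X=1$) and $[q_a(\pi)]$ is equivalent to solving $$\operatorname*{minimise}_{q(h,j)\in\mathcal{P}}\ -\sum_{j=1}^N\int\Big(\sum_{h\in\mathcal{H}}q(h,j)f_h(X)\Big)\log\Big(\sum_{h\in\mathcal{H}}q(h,j)f_h(X)\Big)\,\delta X,$$ where $$\mathcal{P}=\Big\{q(h,j)=\sum_{i=1}^N\Big(\sum_{a=(h_1,\dots,h_N)\in\mathcal{A}:\,h_i=h} w_a\sum_{\pi\in\Pi_N:\,\pi(i)=j}q_a(\pi)\Big)\ \Big|\ q_a(\pi)\ge0,\ \sum_{\pi\in\Pi_N}q_a(\pi)=1\ \forall a\Big\}.$$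
   Context: Single-target states lie in $\mathcal{X}\subseteq\mathbb{R}^d$. The set integral is $\int v(X)\,\delta X = v(\emptyset)+\sum_{n=1}^\infty\frac{1}{n!}\int\cdots\int v(\{x_1,\dots,x_n\})\,\mathrm{d}x_1\cdots\mathrm{d}x_n$. A Bernoulli density with existence probability $r$ and state density $p(x)$ is $b(\emptyset)=1-r$, $b(\{x\})=r\,p(x)$, $b(X)=0$ for $|X|>1$. $\mathcal{H}$ is an index set of single-target hypotheses, each $f_h$ ($h\in\mathcal{H}$) a Bernoulli density; $\mathcal{A}\subseteq\mathcal{H}^N$ is a finite set of global hypotheses $a=(h_1,\dots,h_N)$ with weights $w_a\ge0$, $\sum_a w_a=1$. $\sum_{\biguplus_{i=1}^N X_i=X}$ sums over ordered tuples of disjoint subsets with union $X$. $\Pi_N$ is the set of permutations of $\{1,\dots,N\}$. Convention $0\log0=0$. *)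

theory Defs
  imports "HOL-Analysis.Analysis" "HOL-Combinatorics.Permutations"
begin

text \<open>Single-target state space: a Borel set Xs in a Euclidean space 'a, with
Lebesgue measure.  Multi-target densities are functions on finite sets of states.\<close>

definition state_measure :: "'a::euclidean_space set \<Rightarrow> 'a measure" where
  "state_measure Xs = restrict_space lborel Xs"

definition set_nn_integral :: "'a::euclidean_space set \<Rightarrow> ('a set \<Rightarrow> ennreal) \<Rightarrow> ennreal" where
  "set_nn_integral Xs v =
     v {} + (\<Sum>n. (\<integral>\<^sup>+ x. v (x ` {..<Suc n}) \<partial>(PiM {..<Suc n} (\<lambda>_. state_measure Xs)))
                     / ennreal (fact (Suc n)))"

definition set_integral_ereal :: "'a::euclidean_space set \<Rightarrow> ('a set \<Rightarrow> ereal) \<Rightarrow> ereal" where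
  "set_integral_ereal Xs v =
     enn2ereal (set_nn_integral Xs (\<lambda>X. e2ennreal (v X)))
     - enn2ereal (set_nn_integral Xs (\<lambda>X. e2ennreal (- v X)))"

definition is_bernoulli :: "'a::euclidean_space set \<Rightarrow> ('a set \<Rightarrow> real) \<Rightarrow> bool" where
  "is_bernoulli Xs b \<longleftrightarrow>
     (\<exists>r p. 0 \<le> r \<and> r \<le> 1 \<and> p \<in> borel_measurable lborel \<and> (\<forall>x\<in>Xs. 0 \<le> p x)
        \<and> (\<integral>\<^sup>+ x. ennreal (p x) \<partial>state_measure Xs) = 1
        \<and> b {} = 1 - r \<and> (\<forall>x\<in>Xs. b {x} = r * p x)
        \<and> (\<forall>X. X \<subseteq> Xs \<and> finite X \<and> 2 \<le> card X \<longrightarrow> b X = 0))"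

text \<open>Pointwise u log v with the conventions 0 log 0 = 0 (indeed 0 log v = 0) and
u log 0 = -infinity for u > 0.\<close>
definition xlogy :: "real \<Rightarrow> real \<Rightarrow> ereal" where
  "xlogy u v = (if u \<le> 0 then 0 else if v \<le> 0 then - \<infinity> else ereal (u * ln v))"

definition cross_ent :: "'a::euclidean_space set \<Rightarrow> ('a set \<Rightarrow> real) \<Rightarrow> ('a set \<Rightarrow> real) \<Rightarrow> ereal" where
  "cross_ent Xs f g = - set_integral_ereal Xs (\<lambda>X. xlogy (f X) (g X))"

definition perms :: "nat \<Rightarrow> (nat \<Rightarrow> nat) set" where
  "perms N = {\<pi>. \<pi> permutes {..<N}}"

text \<open>Zero-temperature objective tilde J_0.  Global hypotheses a are lists of length N
(index i ranges over 0..N-1), f h is the Bernoulli density of single-target hypothesis h.\<close>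
definition J0 :: "'a::euclidean_space set \<Rightarrow> nat \<Rightarrow> 'h list set \<Rightarrow> ('h list \<Rightarrow> real)
     \<Rightarrow> ('h \<Rightarrow> 'a set \<Rightarrow> real) \<Rightarrow> (nat \<Rightarrow> 'a set \<Rightarrow> real) \<Rightarrow> ('h list \<Rightarrow> (nat \<Rightarrow> nat) \<Rightarrow> real) \<Rightarrow> ereal" where
  "J0 Xs N A w f g q =
     (\<Sum>a\<in>A. \<Sum>\<pi>\<in>perms N. ereal (w a * q a \<pi>) * (\<Sum>i<N. cross_ent Xs (f (a ! i)) (g (\<pi> i))))"

definition valid_q :: "nat \<Rightarrow> 'h list set \<Rightarrow> ('h list \<Rightarrow> (nat \<Rightarrow> nat) \<Rightarrow> real) \<Rightarrow> bool" where
  "valid_q N A q \<longleftrightarrow> (\<forall>a\<in>A. (\<forall>\<pi>\<in>perms N. 0 \<le> q a \<pi>) \<and> (\<Sum>\<pi>\<in>perms N. q a \<pi>) = 1)"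

definition induced_q :: "nat \<Rightarrow> 'h list set \<Rightarrow> ('h list \<Rightarrow> real) \<Rightarrow> ('h list \<Rightarrow> (nat \<Rightarrow> nat) \<Rightarrow> real)
     \<Rightarrow> 'h \<Rightarrow> nat \<Rightarrow> real" where
  "induced_q N A w q h j =
     (\<Sum>i<N. \<Sum>a\<in>{a\<in>A. a ! i = h}. w a * (\<Sum>\<pi>\<in>{\<pi>\<in>perms N. \<pi> i = j}. q a \<pi>))"

definition P_set :: "nat \<Rightarrow> 'h list set \<Rightarrow> ('h list \<Rightarrow> real) \<Rightarrow> ('h \<Rightarrow> nat \<Rightarrow> real) set" where
  "P_set N A w = {induced_q N A w q | q. valid_q N A q}"

text \<open>Objective over P: sum_j of -int m_j log m_j with m_j = sum_h q(h,j) f_h.  The sum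
over h in H is taken over the hypotheses occurring in A (q(h,j) = 0 for all others).\<close>
definition mix_obj :: "'a::euclidean_space set \<Rightarrow> nat \<Rightarrow> 'h list set \<Rightarrow> ('h \<Rightarrow> 'a set \<Rightarrow> real)
     \<Rightarrow> ('h \<Rightarrow> nat \<Rightarrow> real) \<Rightarrow> ereal" where
  "mix_obj Xs N A f Q =
     (\<Sum>j<N. let m = (\<lambda>X. \<Sum>h\<in>(\<Union>a\<in>A. set a). Q h j * f h X) in cross_ent Xs m m)"

end

theory Submission
  imports Defs
begin


lemma sm_space: "space (state_measure Xs) = Xs"
  by (simp add: state_measure_def space_restrict_space)

lemma sm_sigma_finite: "Xs \<in> sets lborel \<Longrightarrow> sigma_finite_measure (state_measure Xs)"
  unfolding state_measure_def
  by (rule sigma_finite_measure_restrict_space) (auto intro: sigma_finite_lborel)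

lemma sm_singleton_null:
  assumes "Xs \<in> sets lborel" "c \<in> Xs"
  shows "emeasure (state_measure Xs) {c} = 0"
  unfolding state_measure_def using assms
  by (subst emeasure_restrict_space) auto

lemma sm_sets: "Xs \<in> sets lborel \<Longrightarrow> A \<subseteq> Xs \<Longrightarrow> A \<in> sets borel \<Longrightarrow> A \<in> sets (state_measure Xs)"
  unfolding state_measure_def by (subst sets_restrict_space_iff) auto

lemma diag_null:
  assumes Xs: "Xs \<in> sets lborel" and n: "1 \<le> n"
  shows "emeasure (PiM {..<Suc n} (\<lambda>_. state_measure Xs))
           {x \<in> space (PiM {..<Suc n} (\<lambda>_. state_measure Xs)). x 0 = x 1} = 0"
proof -
  let ?M = "state_measure Xs"
  interpret P: product_sigma_finite "\<lambda>_. ?M"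
    unfolding product_sigma_finite_def using sm_sigma_finite[OF Xs] by blast
  let ?I = "{1..<Suc n}"
  have ins: "{..<Suc n} = insert 0 ?I" by auto
  let ?D = "{x \<in> space (PiM (insert 0 ?I) (\<lambda>_. ?M)). x 0 = x 1}"
  have Dm: "?D \<in> sets (PiM (insert 0 ?I) (\<lambda>_. ?M))"
  proof -
    have id: "(\<lambda>y. y) \<in> borel_measurable ?M"
      unfolding state_measure_def by (rule measurable_restrict_space1) simp
    have c: "\<And>i. i \<in> insert 0 ?I \<Longrightarrow> (\<lambda>x. x i) \<in> borel_measurable (PiM (insert 0 ?I) (\<lambda>_. ?M))"
      by (rule measurable_compose[OF measurable_component_singleton[where M="\<lambda>_. ?M" and I="insert 0 ?I"] id])
    show ?thesis by (rule measurable_equality_set) (use c n in auto)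
  qed
  have "emeasure (PiM (insert 0 ?I) (\<lambda>_. ?M)) ?D = (\<integral>\<^sup>+ x. indicator ?D x \<partial>(PiM (insert 0 ?I) (\<lambda>_. ?M)))"
    using Dm by simp
  also have "\<dots> = (\<integral>\<^sup>+ x. (\<integral>\<^sup>+ y. indicator ?D (x(0:=y)) \<partial>?M) \<partial>(PiM ?I (\<lambda>_. ?M)))"
    by (rule P.product_nn_integral_insert) (use Dm in auto)
  also have "\<dots> = (\<integral>\<^sup>+ x. 0 \<partial>(PiM ?I (\<lambda>_. ?M)))"
  proof (rule nn_integral_cong)
    fix x assume x: "x \<in> space (PiM ?I (\<lambda>_. ?M))"
    have x1: "x 1 \<in> Xs" using x n by (auto simp: space_PiM sm_space)
    have "(\<integral>\<^sup>+ y. indicator ?D (x(0:=y)) \<partial>?M) \<le> (\<integral>\<^sup>+ y. indicator {x 1} y \<partial>?M)"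
      by (rule nn_integral_mono) (auto simp: indicator_def)
    also have "\<dots> = 0" using sm_singleton_null[OF Xs x1] sm_sets[OF Xs, of "{x 1}"] x1 by simp
    finally show "(\<integral>\<^sup>+ y. indicator ?D (x(0:=y)) \<partial>?M) = 0" by simp
  qed
  finally show ?thesis by (simp add: ins)
qed

lemma SI_reduce:
  fixes v :: "'a::euclidean_space set \<Rightarrow> ennreal"
  assumes Xs: "Xs \<in> sets lborel"
    and van: "\<And>X. X \<subseteq> Xs \<Longrightarrow> finite X \<Longrightarrow> 2 \<le> card X \<Longrightarrow> v X = 0"
    and meas: "(\<lambda>x. v {x}) \<in> borel_measurable (state_measure Xs)"
  shows "set_nn_integral Xs v = v {} + (\<integral>\<^sup>+ x. v {x} \<partial>state_measure Xs)"
proof -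
  let ?M = "state_measure Xs"
  interpret P: product_sigma_finite "\<lambda>_. ?M"
    unfolding product_sigma_finite_def using sm_sigma_finite[OF Xs] by blast
  let ?F = "\<lambda>n. (\<integral>\<^sup>+ x. v (x ` {..<Suc n}) \<partial>(PiM {..<Suc n} (\<lambda>_. ?M))) / ennreal (fact (Suc n))"
  have F0: "?F 0 = (\<integral>\<^sup>+ x. v {x} \<partial>?M)"
  proof -
    have e: "{..<Suc 0} = {0::nat}" by auto
    have "?F 0 = (\<integral>\<^sup>+ x. v (x ` {0::nat}) \<partial>(PiM {0::nat} (\<lambda>_. ?M)))"
      unfolding e by (simp add: divide_ennreal_def)
    also have "\<dots> = (\<integral>\<^sup>+ x. v {x (0::nat)} \<partial>(PiM {0::nat} (\<lambda>_. ?M)))"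
      by simp
    also have "\<dots> = (\<integral>\<^sup>+ x. v {x} \<partial>?M)"
      by (rule P.product_nn_integral_singleton[OF meas])
    finally show ?thesis .
  qed
  have Fn: "?F n = 0" if n: "n \<notin> {0}" for n
  proof -
    from n have n1: "1 \<le> n" by simp
    let ?P = "PiM {..<Suc n} (\<lambda>_. ?M)"
    let ?D = "{x \<in> space ?P. x 0 = x 1}"
    have Dm: "?D \<in> sets ?P"
    proof -
      have id: "(\<lambda>y. y) \<in> borel_measurable ?M"
        unfolding state_measure_def by (rule measurable_restrict_space1) simp
      have c: "\<And>i. i \<in> {..<Suc n} \<Longrightarrow> (\<lambda>x. x i) \<in> borel_measurable ?P"
        by (rule measurable_compose[OF measurable_component_singleton[where M="\<lambda>_. ?M" and I="{..<Suc n}"] id])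
      show ?thesis by (rule measurable_equality_set) (use c n1 in auto)
    qed
    have "(\<integral>\<^sup>+ x. v (x ` {..<Suc n}) \<partial>?P) \<le> (\<integral>\<^sup>+ x. \<infinity> * indicator ?D x \<partial>?P)"
    proof (rule nn_integral_mono)
      fix x assume x: "x \<in> space ?P"
      show "v (x ` {..<Suc n}) \<le> \<infinity> * indicator ?D x"
      proof (cases "x 0 = x 1")
        case True then show ?thesis using x by (simp add: indicator_def)
      next
        case False
        have sub: "x ` {..<Suc n} \<subseteq> Xs" using x by (auto simp: space_PiM sm_space)
        have "{x 0, x 1} \<subseteq> x ` {..<Suc n}" using n1 by auto
        hence "card {x 0, x 1} \<le> card (x ` {..<Suc n})" by (intro card_mono) auto
        hence "2 \<le> card (x ` {..<Suc n})" using False by simp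
        with van[OF sub] show ?thesis by simp
      qed
    qed
    also have "\<dots> = \<infinity> * emeasure ?P ?D" using Dm by (rule nn_integral_cmult_indicator)
    also have "\<dots> = 0" using diag_null[OF Xs n1] by simp
    finally show ?thesis by simp
  qed
  have "suminf ?F = (\<Sum>n\<in>{0}. ?F n)" by (rule suminf_finite) (use Fn in auto)
  then show ?thesis unfolding set_nn_integral_def using F0 by simp
qed



lemma e2ennreal_zero: "e2ennreal 0 = 0"
  by (simp add: e2ennreal_neg)

lemma xlogy_nonpos[simp]: "u \<le> 0 \<Longrightarrow> xlogy u v = 0"
  by (simp add: xlogy_def)

lemma xlogy_pos: "0 \<le> u \<Longrightarrow> 0 < v \<Longrightarrow> xlogy u v = ereal (u * ln v)"
  by (auto simp: xlogy_def)

lemma xlogy_zero2: "0 < u \<Longrightarrow> xlogy u 0 = - \<infinity>"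
  by (simp add: xlogy_def)

lemma key_ln: "0 < (f::real) \<Longrightarrow> 0 < g \<Longrightarrow> f * ln g \<le> f * ln f - f + g"
proof -
  assume f: "0 < f" and g: "0 < g"
  have "ln (g / f) \<le> g / f - 1" using f g by (intro ln_le_minus_one) auto
  hence "f * ln (g / f) \<le> f * (g / f - 1)" using f by (intro mult_left_mono) auto
  thus ?thesis using f g by (simp add: ln_div algebra_simps)
qed

lemma P1:
  assumes "0 \<le> f" "0 \<le> g"
  shows "e2ennreal (xlogy f g) \<le> e2ennreal (xlogy f f) + ennreal g"
proof (cases "f = 0")
  case True then show ?thesis by (simp add: e2ennreal_zero)
next
  case False
  hence f: "0 < f" using assms by simp
  show ?thesis
  proof (cases "g = 0")
    case True then show ?thesis using f by (simp add: xlogy_zero2 e2ennreal_neg)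
  next
    case False
    hence g: "0 < g" using assms by simp
    have "f * ln g \<le> max (f * ln f) 0 + g" using key_ln[OF f g] f max.cobounded1[of "f*ln f" 0] by linarith
    hence "ennreal (f * ln g) \<le> ennreal (max (f * ln f) 0 + g)" by (rule ennreal_leI)
    also have "\<dots> = ennreal (max (f * ln f) 0) + ennreal g" using assms by (intro ennreal_plus) auto
    also have "ennreal (max (f * ln f) 0) = ennreal (f * ln f)"
      by (cases "f * ln f \<ge> 0") (auto simp: ennreal_neg max_def)
    finally show ?thesis using f g by (simp add: xlogy_pos)
  qed
qed

lemma P3:
  assumes "0 \<le> m" "0 \<le> g"
  shows "e2ennreal (xlogy m g) + e2ennreal (- xlogy m m) + ennreal m
         \<le> e2ennreal (- xlogy m g) + e2ennreal (xlogy m m) + ennreal g"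
proof (cases "m = 0")
  case True then show ?thesis using assms by (simp add: e2ennreal_zero)
next
  case False
  hence m: "0 < m" using assms by simp
  show ?thesis
  proof (cases "g = 0")
    case True then show ?thesis using m by (simp add: xlogy_zero2 e2ennreal_neg)
  next
    case False
    hence g: "0 < g" using assms by simp
    have k: "m * ln g \<le> m * ln m - m + g" using key_ln[OF m g] .
    have "max (m * ln g) 0 + max (- (m * ln m)) 0 + m \<le> max (-(m * ln g)) 0 + max (m * ln m) 0 + g"
    proof -
      have "\<And>a b::real. a \<le> b - m + g \<Longrightarrow> max a 0 + max (- b) 0 + m \<le> max (- a) 0 + max b 0 + g"
        by (simp add: max_def)
      thus ?thesis using k by blast
    qed
    hence "ennreal (max (m * ln g) 0 + max (- (m * ln m)) 0 + m) \<le> ennreal (max (-(m * ln g)) 0 + max (m * ln m) 0 + g)"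
      by (rule ennreal_leI)
    moreover have "\<And>x. ennreal (max x 0) = ennreal x" by (auto simp: ennreal_neg max_def)
    ultimately show ?thesis using m g
      by (simp add: xlogy_pos ennreal_plus del: ennreal_plus[symmetric])
  qed
qed

lemma P2_aux_zero:
  assumes fin: "finite K" and Q: "\<forall>k\<in>K. 0 \<le> Q k" and F: "\<forall>k\<in>K. 0 \<le> F k"
  shows "(\<Sum>k\<in>K. ennreal (Q k) * e2ennreal (- xlogy (F k) 0))
       = (if 0 < (\<Sum>k\<in>K. Q k * F k) then top else 0)"
proof -
  have t: "ennreal (Q k) * e2ennreal (- xlogy (F k) 0) = (if 0 < Q k * F k then top else 0)" if "k \<in> K" for k
  proof (cases "0 < F k")
    case True
    then show ?thesis
    proof (cases "Q k = 0")
      case False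
      hence "0 < Q k" using Q that by force
      then show ?thesis using True by (simp add: xlogy_zero2 ennreal_mult_top)
    qed (use True in \<open>simp add: xlogy_zero2\<close>)
  next
    case False
    hence "F k = 0" using F that by force
    then show ?thesis by (simp add: e2ennreal_zero)
  qed
  have pos_iff: "0 < (\<Sum>k\<in>K. Q k * F k) \<longleftrightarrow> (\<exists>k\<in>K. 0 < Q k * F k)"
  proof
    assume "0 < (\<Sum>k\<in>K. Q k * F k)"
    show "\<exists>k\<in>K. 0 < Q k * F k"
    proof (rule ccontr)
      assume "\<not> (\<exists>k\<in>K. 0 < Q k * F k)"
      hence "(\<Sum>k\<in>K. Q k * F k) \<le> 0" by (intro sum_nonpos) auto
      with \<open>0 < (\<Sum>k\<in>K. Q k * F k)\<close> show False by simp
    qed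
  next
    assume "\<exists>k\<in>K. 0 < Q k * F k"
    then obtain k where k: "k \<in> K" "0 < Q k * F k" by blast
    show "0 < (\<Sum>k\<in>K. Q k * F k)"
      by (rule sum_pos2[where f="\<lambda>k. Q k * F k", OF fin k]) (use Q F in auto)
  qed
  have "(\<Sum>k\<in>K. ennreal (Q k) * e2ennreal (- xlogy (F k) 0)) = (\<Sum>k\<in>K. (if 0 < Q k * F k then top else 0))"
    using t by (rule sum.cong[OF refl])
  also have "\<dots> = (if 0 < (\<Sum>k\<in>K. Q k * F k) then top else 0)"
  proof (cases "\<exists>k\<in>K. 0 < Q k * F k")
    case True
    then obtain k where k: "k \<in> K" "0 < Q k * F k" by blast
    have "(\<Sum>k\<in>K. (if 0 < Q k * F k then top else 0::ennreal)) = top"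
      using fin k by (subst ennreal_sum_eq_top) auto
    then show ?thesis using True pos_iff by simp
  next
    case False
    then show ?thesis using pos_iff by (auto intro!: sum.neutral)
  qed
  finally show ?thesis .
qed

lemma P2:
  assumes fin: "finite K" and Q: "\<forall>k\<in>K. 0 \<le> Q k" and F: "\<forall>k\<in>K. 0 \<le> F k" and g: "0 \<le> g"
  shows "e2ennreal (xlogy (\<Sum>k\<in>K. Q k * F k) g) + (\<Sum>k\<in>K. ennreal (Q k) * e2ennreal (- xlogy (F k) g))
       = e2ennreal (- xlogy (\<Sum>k\<in>K. Q k * F k) g) + (\<Sum>k\<in>K. ennreal (Q k) * e2ennreal (xlogy (F k) g))"
    and "e2ennreal (xlogy (\<Sum>k\<in>K. Q k * F k) g) \<le> (\<Sum>k\<in>K. ennreal (Q k) * e2ennreal (xlogy (F k) g))"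
proof -
  let ?m = "\<Sum>k\<in>K. Q k * F k"
  have m0: "0 \<le> ?m" using Q F by (intro sum_nonneg) auto
  have "e2ennreal (xlogy (\<Sum>k\<in>K. Q k * F k) g) + (\<Sum>k\<in>K. ennreal (Q k) * e2ennreal (- xlogy (F k) g))
       = e2ennreal (- xlogy (\<Sum>k\<in>K. Q k * F k) g) + (\<Sum>k\<in>K. ennreal (Q k) * e2ennreal (xlogy (F k) g))
     \<and> e2ennreal (xlogy (\<Sum>k\<in>K. Q k * F k) g) \<le> (\<Sum>k\<in>K. ennreal (Q k) * e2ennreal (xlogy (F k) g))"
  proof (cases "g = 0")
    case True
    have z: "e2ennreal (xlogy x 0) = 0" for x
      by (cases "x \<le> 0") (auto simp: xlogy_zero2 e2ennreal_neg e2ennreal_zero)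
    have zm: "e2ennreal (- xlogy ?m 0) = (if 0 < ?m then top else 0)"
      using m0 by (auto simp: xlogy_zero2 e2ennreal_zero)
    show ?thesis using True P2_aux_zero[OF fin Q F] by (simp add: z zm)
  next
    case False
    hence g: "0 < g" using g by simp
    define L where "L = ln g"
    have x: "\<And>x. 0 \<le> x \<Longrightarrow> xlogy x g = ereal (x * L)" using g by (simp add: xlogy_pos L_def)
    have mx: "xlogy ?m g = ereal (?m * L)" using x[OF m0] .
    have Fx: "\<And>k. k \<in> K \<Longrightarrow> xlogy (F k) g = ereal (F k * L)" using x F by auto
    show ?thesis
    proof (cases "0 \<le> L")
      case True
      have s: "(\<Sum>k\<in>K. ennreal (Q k) * ennreal (F k * L)) = ennreal (?m * L)"
        using Q F True by (simp add: ennreal_mult[symmetric] sum_distrib_right mult.assoc)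
      have s0: "(\<Sum>k\<in>K. ennreal (Q k) * ennreal (- (F k * L))) = 0"
        using Q F True by (auto intro!: sum.neutral simp: ennreal_neg)
      have "ennreal (- (?m * L)) = 0" using m0 True by (intro ennreal_neg) simp
      then show ?thesis using s s0 by (simp add: mx Fx cong: sum.cong)
    next
      case False
      have s: "(\<Sum>k\<in>K. ennreal (Q k) * ennreal (- (F k * L))) = ennreal (- (?m * L))"
      proof -
        have "(\<Sum>k\<in>K. ennreal (Q k) * ennreal (- (F k * L))) = (\<Sum>k\<in>K. ennreal (Q k * (- (F k * L))))"
          using Q F False by (intro sum.cong refl, subst ennreal_mult) (auto simp: mult_nonneg_nonpos)
        also have "\<dots> = ennreal (\<Sum>k\<in>K. Q k * (- (F k * L)))"
          using Q F False by (intro sum_ennreal) (simp add: mult_nonneg_nonpos)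
        also have "(\<Sum>k\<in>K. Q k * (- (F k * L))) = - (?m * L)"
          by (simp add: sum_distrib_right sum_negf mult.assoc)
        finally show ?thesis .
      qed
      have s0: "(\<Sum>k\<in>K. ennreal (Q k) * ennreal (F k * L)) = 0"
        using Q F False by (auto intro!: sum.neutral simp: ennreal_neg mult_nonneg_nonpos)
      have "ennreal (?m * L) = 0" using m0 False by (intro ennreal_neg) (simp add: mult_nonneg_nonpos)
      then show ?thesis using s s0 by (simp add: mx Fx cong: sum.cong)
    qed
  qed
  then show "e2ennreal (xlogy (\<Sum>k\<in>K. Q k * F k) g) + (\<Sum>k\<in>K. ennreal (Q k) * e2ennreal (- xlogy (F k) g))
       = e2ennreal (- xlogy (\<Sum>k\<in>K. Q k * F k) g) + (\<Sum>k\<in>K. ennreal (Q k) * e2ennreal (xlogy (F k) g))"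
    and "e2ennreal (xlogy (\<Sum>k\<in>K. Q k * F k) g) \<le> (\<Sum>k\<in>K. ennreal (Q k) * e2ennreal (xlogy (F k) g))"
    by auto
qed



lemma L2:
  fixes a b X Y :: ennreal
  assumes "a + X = Y + b" "a < top" "b < top"
  shows "-(enn2ereal a - enn2ereal Y) = -(enn2ereal b - enn2ereal X)"
proof -
  obtain a' where a: "a = ennreal a'" "0 \<le> a'" using assms(2) by (cases a) auto
  obtain b' where b: "b = ennreal b'" "0 \<le> b'" using assms(3) by (cases b) auto
  show ?thesis
  proof (cases "X = top")
    case True
    hence "Y + b = top" using assms(1) by simp
    hence "Y = top" using b by (simp add: ennreal_add_eq_top)
    then show ?thesis using True a b by simp
  next
    case False
    then obtain x where x: "X = ennreal x" "0 \<le> x" by (cases X) auto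
    have "Y \<noteq> top" using assms(1) a b x by (metis ennreal_add_eq_top ennreal_neq_top)
    then obtain y where y: "Y = ennreal y" "0 \<le> y" by (cases Y) auto
    have "a' + x = y + b'" using assms(1) a b x y by (simp add: ennreal_plus[symmetric] del: ennreal_plus)
    then show ?thesis using a b x y by simp
  qed
qed

lemma L3:
  fixes a b c X Y :: ennreal
  assumes "a + X + c \<le> Y + b + c" "a < top" "b < top" "c < top"
  shows "-(enn2ereal b - enn2ereal X) \<le> -(enn2ereal a - enn2ereal Y)"
proof -
  obtain a' where a: "a = ennreal a'" "0 \<le> a'" using assms(2) by (cases a) auto
  obtain b' where b: "b = ennreal b'" "0 \<le> b'" using assms(3) by (cases b) auto
  obtain c' where c: "c = ennreal c'" "0 \<le> c'" using assms(4) by (cases c) auto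
  show ?thesis
  proof (cases "Y = top")
    case True
    then show ?thesis using a b by simp
  next
    case False
    then obtain y where y: "Y = ennreal y" "0 \<le> y" by (cases Y) auto
    have "X \<noteq> top" using assms(1) a b c y by (auto simp: ennreal_plus[symmetric] top_unique simp del: ennreal_plus)
    then obtain x where x: "X = ennreal x" "0 \<le> x" by (cases X) auto
    have "a' + x + c' \<le> y + b' + c'" using assms(1) a b c x y
      by (simp add: ennreal_plus[symmetric] del: ennreal_plus)
    then show ?thesis using a b x y by simp
  qed
qed

lemma Lstar_step:
  fixes p n SP SN :: ennreal and q :: real
  assumes "0 \<le> q" "p < top" "SP < top"
  shows "ereal q * -(enn2ereal p - enn2ereal n) + -(enn2ereal SP - enn2ereal SN)
       = -(enn2ereal (ennreal q * p + SP) - enn2ereal (ennreal q * n + SN))"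
proof -
  obtain p' where p: "p = ennreal p'" "0 \<le> p'" using assms(2) by (cases p) auto
  obtain s' where s: "SP = ennreal s'" "0 \<le> s'" using assms(3) by (cases SP) auto
  have qp: "ennreal q * p + SP = ennreal (q * p' + s')"
    using p s assms(1) by (simp add: ennreal_mult ennreal_plus)
  show ?thesis
  proof (cases n rule: ennreal_cases)
    case (real n')
    show ?thesis
    proof (cases SN rule: ennreal_cases)
      case (real t')
      have qn: "ennreal q * n + SN = ennreal (q * n' + t')"
        using real \<open>n = ennreal n'\<close> assms(1) \<open>0 \<le> n'\<close> by (simp add: ennreal_mult ennreal_plus)
      have "q * p' + s' \<ge> 0" "q * n' + t' \<ge> 0" using assms(1) p s real \<open>0 \<le> n'\<close> by auto
      then show ?thesis unfolding qp qn using p s real \<open>n = ennreal n'\<close> \<open>0 \<le> n'\<close> assms(1)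
        by (simp del: ennreal_plus add: algebra_simps)
    next
      case top
      have "q * p' + s' \<ge> 0" using assms(1) p s by auto
      then show ?thesis unfolding qp using top p s real assms(1) by (simp del: ennreal_plus)
    qed
  next
    case top
    show ?thesis
    proof (cases "q = 0")
      case True
      then show ?thesis using p s by (simp add: zero_ereal_def[symmetric])
    next
      case False
      hence q: "0 < q" using assms(1) by simp
      have "ennreal q * n = top" using top q by (simp add: ennreal_mult_top)
      moreover have "ereal q * -(enn2ereal p - enn2ereal n) = \<infinity>" using top q p by simp
      moreover have "-(enn2ereal SP - enn2ereal SN) \<noteq> -\<infinity>" using s by (cases SN rule: ennreal_cases) auto
      moreover have "q * p' + s' \<ge> 0" using assms(1) p s by auto
      ultimately show ?thesis using qp by (simp del: ennreal_plus)
    qed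
  qed
qed

lemma Lstar:
  fixes P N :: "'k \<Rightarrow> ennreal" and Q :: "'k \<Rightarrow> real"
  assumes "finite K" "\<forall>k\<in>K. 0 \<le> Q k" "\<forall>k\<in>K. P k < top"
  shows "(\<Sum>k\<in>K. ereal (Q k) * -(enn2ereal (P k) - enn2ereal (N k)))
       = -(enn2ereal (\<Sum>k\<in>K. ennreal (Q k) * P k) - enn2ereal (\<Sum>k\<in>K. ennreal (Q k) * N k))"
  using assms
proof (induction K rule: finite_induct)
  case empty then show ?case by simp
next
  case (insert k K)
  have lt: "(\<Sum>k\<in>K. ennreal (Q k) * P k) < top"
    using insert by (simp add: ennreal_mult_less_top less_top)
  show ?case using insert Lstar_step[OF _ _ lt, of "Q k" "P k" "N k"] by simp
qed



definition good :: "'a::euclidean_space set \<Rightarrow> ('a set \<Rightarrow> real) \<Rightarrow> bool" where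
  "good Xs f \<longleftrightarrow> (\<forall>X. X \<subseteq> Xs \<and> finite X \<and> 2 \<le> card X \<longrightarrow> f X = 0)
     \<and> (\<lambda>x. f {x}) \<in> borel_measurable (state_measure Xs) \<and> 0 \<le> f {} \<and> (\<forall>x\<in>Xs. 0 \<le> f {x})"

definition S0 :: "'a::euclidean_space set \<Rightarrow> ('a set \<Rightarrow> ennreal) \<Rightarrow> ennreal" where
  "S0 Xs F = F {} + (\<integral>\<^sup>+ x. F {x} \<partial>state_measure Xs)"

definition posp :: "('b \<Rightarrow> real) \<Rightarrow> ('b \<Rightarrow> real) \<Rightarrow> 'b \<Rightarrow> ennreal" where
  "posp f g X = e2ennreal (xlogy (f X) (g X))"

definition negp :: "('b \<Rightarrow> real) \<Rightarrow> ('b \<Rightarrow> real) \<Rightarrow> 'b \<Rightarrow> ennreal" where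
  "negp f g X = e2ennreal (- xlogy (f X) (g X))"

lemma S0_mono:
  assumes "F {} \<le> G {}" "\<And>x. x \<in> Xs \<Longrightarrow> F {x} \<le> G {x}"
  shows "S0 Xs F \<le> S0 Xs G"
  unfolding S0_def using assms
  by (intro add_mono nn_integral_mono) (auto simp: sm_space)

lemma S0_add:
  assumes "(\<lambda>x. F {x}) \<in> borel_measurable (state_measure Xs)" "(\<lambda>x. G {x}) \<in> borel_measurable (state_measure Xs)"
  shows "S0 Xs (\<lambda>X. F X + G X) = S0 Xs F + S0 Xs G"
  unfolding S0_def using assms by (simp add: nn_integral_add algebra_simps)

lemma S0_cmult:
  assumes "(\<lambda>x. F {x}) \<in> borel_measurable (state_measure Xs)"
  shows "S0 Xs (\<lambda>X. c * F X) = c * S0 Xs F"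
  unfolding S0_def using assms by (simp add: nn_integral_cmult distrib_left)

lemma S0_sum:
  assumes "\<And>k. k \<in> K \<Longrightarrow> (\<lambda>x. F k {x}) \<in> borel_measurable (state_measure Xs)"
  shows "S0 Xs (\<lambda>X. \<Sum>k\<in>K. F k X) = (\<Sum>k\<in>K. S0 Xs (F k))"
  unfolding S0_def using assms by (simp add: nn_integral_sum sum.distrib)

lemma xlogy_meas[measurable]:
  assumes [measurable]: "F \<in> borel_measurable M" "G \<in> borel_measurable M"
  shows "(\<lambda>x. xlogy (F x) (G x)) \<in> borel_measurable M"
  unfolding xlogy_def by measurable

lemma good_meas: "good Xs f \<Longrightarrow> (\<lambda>x. f {x}) \<in> borel_measurable (state_measure Xs)"
  by (simp add: good_def)

lemma posp_meas: "good Xs f \<Longrightarrow> good Xs g \<Longrightarrow> (\<lambda>x. posp f g {x}) \<in> borel_measurable (state_measure Xs)"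
  unfolding posp_def using good_meas[of Xs f] good_meas[of Xs g] by measurable

lemma negp_meas: "good Xs f \<Longrightarrow> good Xs g \<Longrightarrow> (\<lambda>x. negp f g {x}) \<in> borel_measurable (state_measure Xs)"
  unfolding negp_def using good_meas[of Xs f] good_meas[of Xs g] by measurable

lemma ennr_meas: "good Xs f \<Longrightarrow> (\<lambda>x. ennreal (f {x})) \<in> borel_measurable (state_measure Xs)"
  using good_meas[of Xs f] by measurable

lemma CE_repr:
  assumes Xs: "Xs \<in> sets lborel" and f: "good Xs f" and g: "good Xs g"
  shows "cross_ent Xs f g = -(enn2ereal (S0 Xs (posp f g)) - enn2ereal (S0 Xs (negp f g)))"
proof -
  have van: "f X = 0" if "X \<subseteq> Xs" "finite X" "2 \<le> card X" for X
    using f that by (auto simp: good_def)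
  have 1: "set_nn_integral Xs (\<lambda>X. e2ennreal (xlogy (f X) (g X))) = S0 Xs (posp f g)"
    unfolding S0_def posp_def
    by (rule SI_reduce[OF Xs]) (use van posp_meas[OF f g] in \<open>auto simp: e2ennreal_zero posp_def\<close>)
  have 2: "set_nn_integral Xs (\<lambda>X. e2ennreal (- xlogy (f X) (g X))) = S0 Xs (negp f g)"
    unfolding S0_def negp_def
    by (rule SI_reduce[OF Xs]) (use van negp_meas[OF f g] in \<open>auto simp: e2ennreal_zero negp_def\<close>)
  show ?thesis unfolding cross_ent_def set_integral_ereal_def 1 2 ..
qed

lemma bern_good:
  assumes Xs: "Xs \<in> sets lborel" and b: "is_bernoulli Xs b"
  shows "good Xs b"
proof -
  obtain r p where rp: "0 \<le> r" "r \<le> 1" "p \<in> borel_measurable lborel" "\<forall>x\<in>Xs. 0 \<le> p x"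
        "b {} = 1 - r" "\<forall>x\<in>Xs. b {x} = r * p x"
        "\<forall>X. X \<subseteq> Xs \<and> finite X \<and> 2 \<le> card X \<longrightarrow> b X = 0"
    using b unfolding is_bernoulli_def by blast
  have "(\<lambda>x. r * p x) \<in> borel_measurable (state_measure Xs)"
    unfolding state_measure_def using rp(3) by (intro measurable_restrict_space1) simp
  hence "(\<lambda>x. b {x}) \<in> borel_measurable (state_measure Xs)"
    by (rule measurable_cong[THEN iffD2, rotated]) (use rp(6) in \<open>auto simp: sm_space\<close>)
  then show ?thesis using rp unfolding good_def by auto
qed

lemma bern_mass:
  assumes Xs: "Xs \<in> sets lborel" and b: "is_bernoulli Xs b"
  shows "S0 Xs (\<lambda>X. ennreal (b X)) = 1"
proof -
  obtain r p where rp: "0 \<le> r" "r \<le> 1" "p \<in> borel_measurable lborel" "\<forall>x\<in>Xs. 0 \<le> p x"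
        "(\<integral>\<^sup>+ x. ennreal (p x) \<partial>state_measure Xs) = 1"
        "b {} = 1 - r" "\<forall>x\<in>Xs. b {x} = r * p x"
    using b unfolding is_bernoulli_def by blast
  have pm: "(\<lambda>x. ennreal (p x)) \<in> borel_measurable (state_measure Xs)"
    unfolding state_measure_def using rp(3) by (intro measurable_restrict_space1) simp
  have "(\<integral>\<^sup>+ x. ennreal (b {x}) \<partial>state_measure Xs) = (\<integral>\<^sup>+ x. ennreal r * ennreal (p x) \<partial>state_measure Xs)"
    by (rule nn_integral_cong) (use rp in \<open>auto simp: sm_space ennreal_mult\<close>)
  also have "\<dots> = ennreal r" using pm rp(5) by (simp add: nn_integral_cmult)
  finally show ?thesis unfolding S0_def using rp by (simp add: ennreal_plus[symmetric] del: ennreal_plus)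
qed

lemma S0_cong:
  assumes "F {} = G {}" "\<And>x. x \<in> Xs \<Longrightarrow> F {x} = G {x}"
  shows "S0 Xs F = S0 Xs G"
  using assms by (intro antisym S0_mono) auto

lemma good_comb:
  assumes fin: "finite K" and Q: "\<forall>k\<in>K. 0 \<le> Q k" and F: "\<forall>k\<in>K. good Xs (F k)"
  shows "good Xs (\<lambda>X. \<Sum>k\<in>K. Q k * F k X)"
proof -
  have m: "(\<lambda>x. \<Sum>k\<in>K. Q k * F k {x}) \<in> borel_measurable (state_measure Xs)"
    using F by (intro borel_measurable_sum borel_measurable_times borel_measurable_const) (auto simp: good_def)
  show ?thesis unfolding good_def using m Q F
    by (auto simp: good_def intro!: sum_nonneg)
qed

lemma comb_mass:
  assumes fin: "finite K" and Q: "\<forall>k\<in>K. 0 \<le> Q k" and F: "\<forall>k\<in>K. good Xs (F k)"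
  shows "S0 Xs (\<lambda>X. ennreal (\<Sum>k\<in>K. Q k * F k X)) = (\<Sum>k\<in>K. ennreal (Q k) * S0 Xs (\<lambda>X. ennreal (F k X)))"
proof -
  have "S0 Xs (\<lambda>X. ennreal (\<Sum>k\<in>K. Q k * F k X)) = S0 Xs (\<lambda>X. \<Sum>k\<in>K. ennreal (Q k) * ennreal (F k X))"
  proof (rule S0_cong)
    show "ennreal (\<Sum>k\<in>K. Q k * F k {}) = (\<Sum>k\<in>K. ennreal (Q k) * ennreal (F k {}))"
      using Q F by (subst sum_ennreal[symmetric]) (auto simp: good_def ennreal_mult intro!: sum.cong)
    fix x assume "x \<in> Xs"
    then show "ennreal (\<Sum>k\<in>K. Q k * F k {x}) = (\<Sum>k\<in>K. ennreal (Q k) * ennreal (F k {x}))"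
      using Q F by (subst sum_ennreal[symmetric]) (auto simp: good_def ennreal_mult intro!: sum.cong)
  qed
  also have "\<dots> = (\<Sum>k\<in>K. S0 Xs (\<lambda>X. ennreal (Q k) * ennreal (F k X)))"
  proof (rule S0_sum)
    fix k assume "k \<in> K"
    hence [measurable]: "(\<lambda>x. ennreal (F k {x})) \<in> borel_measurable (state_measure Xs)"
      using F ennr_meas by blast
    show "(\<lambda>x. ennreal (Q k) * ennreal (F k {x})) \<in> borel_measurable (state_measure Xs)" by measurable
  qed
  also have "\<dots> = (\<Sum>k\<in>K. ennreal (Q k) * S0 Xs (\<lambda>X. ennreal (F k X)))"
    by (intro sum.cong refl S0_cmult) (use F ennr_meas in auto)
  finally show ?thesis .
qed

lemma I1:
  assumes f: "good Xs f" and g: "good Xs g"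
    and ff: "S0 Xs (posp f f) < top" and gm: "S0 Xs (\<lambda>X. ennreal (g X)) < top"
  shows "S0 Xs (posp f g) < top"
proof -
  have "S0 Xs (posp f g) \<le> S0 Xs (\<lambda>X. posp f f X + ennreal (g X))"
    by (rule S0_mono) (use f g in \<open>auto simp: posp_def good_def intro!: P1\<close>)
  also have "\<dots> = S0 Xs (posp f f) + S0 Xs (\<lambda>X. ennreal (g X))"
    by (rule S0_add) (use posp_meas[OF f f] ennr_meas[OF g] in auto)
  also have "\<dots> < top" using ff gm by simp
  finally show ?thesis .
qed

lemma I2:
  assumes Xs: "Xs \<in> sets lborel" and fin: "finite K" and Q: "\<forall>k\<in>K. 0 \<le> Q k"
    and F: "\<forall>k\<in>K. good Xs (F k)" and g: "good Xs g"
    and P: "\<forall>k\<in>K. S0 Xs (posp (F k) g) < top"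
  shows "cross_ent Xs (\<lambda>X. \<Sum>k\<in>K. Q k * F k X) g = (\<Sum>k\<in>K. ereal (Q k) * cross_ent Xs (F k) g)"
    and "S0 Xs (posp (\<lambda>X. \<Sum>k\<in>K. Q k * F k X) g) < top"
proof -
  define m where "m = (\<lambda>X. \<Sum>k\<in>K. Q k * F k X)"
  have gm: "good Xs m" unfolding m_def by (rule good_comb[OF fin Q F])
  have Fn: "\<And>k. k \<in> K \<Longrightarrow> 0 \<le> F k {}" "\<And>k x. k \<in> K \<Longrightarrow> x \<in> Xs \<Longrightarrow> 0 \<le> F k {x}"
    using F by (auto simp: good_def)
  have g0: "0 \<le> g {}" "\<And>x. x \<in> Xs \<Longrightarrow> 0 \<le> g {x}" using g by (auto simp: good_def)
  have eq: "S0 Xs (\<lambda>X. posp m g X + (\<Sum>k\<in>K. ennreal (Q k) * negp (F k) g X))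
          = S0 Xs (\<lambda>X. negp m g X + (\<Sum>k\<in>K. ennreal (Q k) * posp (F k) g X))"
  proof (rule S0_cong)
    show "posp m g {} + (\<Sum>k\<in>K. ennreal (Q k) * negp (F k) g {})
        = negp m g {} + (\<Sum>k\<in>K. ennreal (Q k) * posp (F k) g {})"
      unfolding posp_def negp_def m_def by (rule P2(1)[OF fin Q]) (use Fn g0 in auto)
    fix x assume x: "x \<in> Xs"
    show "posp m g {x} + (\<Sum>k\<in>K. ennreal (Q k) * negp (F k) g {x})
        = negp m g {x} + (\<Sum>k\<in>K. ennreal (Q k) * posp (F k) g {x})"
      unfolding posp_def negp_def m_def by (rule P2(1)[OF fin Q]) (use Fn g0 x in auto)
  qed
  have ms: "\<And>k. k \<in> K \<Longrightarrow> (\<lambda>x. ennreal (Q k) * negp (F k) g {x}) \<in> borel_measurable (state_measure Xs)"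
           "\<And>k. k \<in> K \<Longrightarrow> (\<lambda>x. ennreal (Q k) * posp (F k) g {x}) \<in> borel_measurable (state_measure Xs)"
    using F negp_meas[OF _ g] posp_meas[OF _ g] by (auto intro!: borel_measurable_times)
  have sumN: "S0 Xs (\<lambda>X. \<Sum>k\<in>K. ennreal (Q k) * negp (F k) g X) = (\<Sum>k\<in>K. ennreal (Q k) * S0 Xs (negp (F k) g))"
    by (subst S0_sum) (use ms F negp_meas[OF _ g] in \<open>auto intro!: sum.cong S0_cmult\<close>)
  have sumP: "S0 Xs (\<lambda>X. \<Sum>k\<in>K. ennreal (Q k) * posp (F k) g X) = (\<Sum>k\<in>K. ennreal (Q k) * S0 Xs (posp (F k) g))"
    by (subst S0_sum) (use ms F posp_meas[OF _ g] in \<open>auto intro!: sum.cong S0_cmult\<close>)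
  have eq2: "S0 Xs (posp m g) + (\<Sum>k\<in>K. ennreal (Q k) * S0 Xs (negp (F k) g))
           = S0 Xs (negp m g) + (\<Sum>k\<in>K. ennreal (Q k) * S0 Xs (posp (F k) g))"
  proof -
    have "S0 Xs (\<lambda>X. posp m g X + (\<Sum>k\<in>K. ennreal (Q k) * negp (F k) g X))
        = S0 Xs (posp m g) + S0 Xs (\<lambda>X. \<Sum>k\<in>K. ennreal (Q k) * negp (F k) g X)"
      by (rule S0_add) (use posp_meas[OF gm g] ms in \<open>auto intro!: borel_measurable_sum\<close>)
    moreover have "S0 Xs (\<lambda>X. negp m g X + (\<Sum>k\<in>K. ennreal (Q k) * posp (F k) g X))
        = S0 Xs (negp m g) + S0 Xs (\<lambda>X. \<Sum>k\<in>K. ennreal (Q k) * posp (F k) g X)"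
      by (rule S0_add) (use negp_meas[OF gm g] ms in \<open>auto intro!: borel_measurable_sum\<close>)
    ultimately show ?thesis using eq sumN sumP by simp
  qed
  have bnd: "S0 Xs (posp m g) \<le> S0 Xs (\<lambda>X. \<Sum>k\<in>K. ennreal (Q k) * posp (F k) g X)"
  proof (rule S0_mono)
    show "posp m g {} \<le> (\<Sum>k\<in>K. ennreal (Q k) * posp (F k) g {})"
      unfolding posp_def m_def by (rule P2(2)[OF fin Q]) (use Fn g0 in auto)
    fix x assume x: "x \<in> Xs"
    show "posp m g {x} \<le> (\<Sum>k\<in>K. ennreal (Q k) * posp (F k) g {x})"
      unfolding posp_def m_def by (rule P2(2)[OF fin Q]) (use Fn g0 x in auto)
  qed
  have SPlt: "(\<Sum>k\<in>K. ennreal (Q k) * S0 Xs (posp (F k) g)) < top"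
    using P fin by (simp add: ennreal_mult_less_top less_top)
  have alt: "S0 Xs (posp m g) < top" using bnd sumP SPlt by simp
  then show "S0 Xs (posp (\<lambda>X. \<Sum>k\<in>K. Q k * F k X) g) < top" by (simp add: m_def)
  have "cross_ent Xs m g = -(enn2ereal (S0 Xs (posp m g)) - enn2ereal (S0 Xs (negp m g)))"
    by (rule CE_repr[OF Xs gm g])
  also have "\<dots> = -(enn2ereal (\<Sum>k\<in>K. ennreal (Q k) * S0 Xs (posp (F k) g))
                     - enn2ereal (\<Sum>k\<in>K. ennreal (Q k) * S0 Xs (negp (F k) g)))"
    by (rule L2[OF eq2 alt SPlt])
  also have "\<dots> = (\<Sum>k\<in>K. ereal (Q k) * -(enn2ereal (S0 Xs (posp (F k) g)) - enn2ereal (S0 Xs (negp (F k) g))))"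
    by (rule Lstar[symmetric]) (use fin Q P in auto)
  also have "\<dots> = (\<Sum>k\<in>K. ereal (Q k) * cross_ent Xs (F k) g)"
    by (intro sum.cong refl) (use CE_repr[OF Xs _ g] F in auto)
  finally show "cross_ent Xs (\<lambda>X. \<Sum>k\<in>K. Q k * F k X) g = (\<Sum>k\<in>K. ereal (Q k) * cross_ent Xs (F k) g)"
    by (simp add: m_def)
qed

lemma I3:
  assumes Xs: "Xs \<in> sets lborel" and m: "good Xs m" and g: "good Xs g"
    and mass: "S0 Xs (\<lambda>X. ennreal (m X)) = S0 Xs (\<lambda>X. ennreal (g X))" "S0 Xs (\<lambda>X. ennreal (g X)) < top"
    and a: "S0 Xs (posp m g) < top" and b: "S0 Xs (posp m m) < top"
  shows "cross_ent Xs m m \<le> cross_ent Xs m g"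
proof -
  have m0: "0 \<le> m {}" "\<And>x. x \<in> Xs \<Longrightarrow> 0 \<le> m {x}" using m by (auto simp: good_def)
  have g0: "0 \<le> g {}" "\<And>x. x \<in> Xs \<Longrightarrow> 0 \<le> g {x}" using g by (auto simp: good_def)
  have "S0 Xs (\<lambda>X. posp m g X + negp m m X + ennreal (m X)) \<le> S0 Xs (\<lambda>X. negp m g X + posp m m X + ennreal (g X))"
    by (rule S0_mono) (use m0 g0 in \<open>auto simp: posp_def negp_def intro!: P3\<close>)
  moreover have "S0 Xs (\<lambda>X. posp m g X + negp m m X + ennreal (m X))
      = S0 Xs (posp m g) + S0 Xs (negp m m) + S0 Xs (\<lambda>X. ennreal (m X))"
    using posp_meas[OF m g] negp_meas[OF m m] ennr_meas[OF m]
    by (simp add: S0_add borel_measurable_add)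
  moreover have "S0 Xs (\<lambda>X. negp m g X + posp m m X + ennreal (g X))
      = S0 Xs (negp m g) + S0 Xs (posp m m) + S0 Xs (\<lambda>X. ennreal (g X))"
    using negp_meas[OF m g] posp_meas[OF m m] ennr_meas[OF g]
    by (simp add: S0_add borel_measurable_add)
  ultimately have ineq: "S0 Xs (posp m g) + S0 Xs (negp m m) + S0 Xs (\<lambda>X. ennreal (g X))
      \<le> S0 Xs (negp m g) + S0 Xs (posp m m) + S0 Xs (\<lambda>X. ennreal (g X))"
    using mass by simp
  have "-(enn2ereal (S0 Xs (posp m m)) - enn2ereal (S0 Xs (negp m m)))
        \<le> -(enn2ereal (S0 Xs (posp m g)) - enn2ereal (S0 Xs (negp m g)))"
    by (rule L3[OF ineq a b mass(2)])
  then show ?thesis using CE_repr[OF Xs m m] CE_repr[OF Xs m g] by simp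
qed

lemma bern_props:
  assumes "is_bernoulli Xs b"
  shows "b {} \<le> 1" "b {} = 1 \<Longrightarrow> x \<in> Xs \<Longrightarrow> b {x} = 0"
  using assms unfolding is_bernoulli_def by auto

lemma good_bern:
  assumes Xs: "Xs \<in> sets lborel" and m: "good Xs m" and mass: "S0 Xs (\<lambda>X. ennreal (m X)) = 1"
    and deg: "m {} = 1 \<Longrightarrow> \<forall>x\<in>Xs. m {x} = 0" and b0: "is_bernoulli Xs b0"
  shows "is_bernoulli Xs m"
proof -
  let ?M = "state_measure Xs"
  define I where "I = (\<integral>\<^sup>+ x. ennreal (m {x}) \<partial>?M)"
  have m0: "0 \<le> m {}" "\<And>x. x \<in> Xs \<Longrightarrow> 0 \<le> m {x}" using m by (auto simp: good_def)
  have van: "\<forall>X. X \<subseteq> Xs \<and> finite X \<and> 2 \<le> card X \<longrightarrow> m X = 0" using m by (auto simp: good_def)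
  have sum1: "ennreal (m {}) + I = 1" using mass by (simp add: S0_def I_def)
  hence "I \<noteq> top" by (metis ennreal_add_eq_top ennreal_one_neq_top)
  then obtain i where i: "I = ennreal i" "0 \<le> i" by (cases I) auto
  have "ennreal (m {} + i) = 1" using sum1 i m0 by (simp add: ennreal_plus)
  hence mi: "m {} + i = 1" using m0 i by (simp only: ennreal_eq_1)
  define r where "r = 1 - m {}"
  have r: "0 \<le> r" "r \<le> 1" "i = r" using mi i m0 by (auto simp: r_def)
  define mp where "mp = (\<lambda>x. if x \<in> Xs then m {x} else 0)"
  have mpm: "mp \<in> borel_measurable lborel"
  proof -
    have "(\<lambda>x. m {x}) \<in> borel_measurable (restrict_space lborel Xs)"
      using m by (simp add: good_def state_measure_def)
    then show ?thesis unfolding mp_def using Xs by (subst (asm) measurable_restrict_space_iff) auto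
  qed
  show ?thesis
  proof (cases "r = 0")
    case False
    hence rp: "0 < r" using r by simp
    define p where "p = (\<lambda>x. mp x / r)"
    have pm: "p \<in> borel_measurable lborel" unfolding p_def using mpm by measurable
    have "(\<integral>\<^sup>+ x. ennreal (p x) \<partial>?M) = (\<integral>\<^sup>+ x. ennreal (m {x}) * ennreal (1 / r) \<partial>?M)"
      by (rule nn_integral_cong) (use m0 rp in \<open>auto simp: p_def mp_def sm_space ennreal_mult[symmetric]\<close>)
    also have "\<dots> = I * ennreal (1 / r)"
      unfolding I_def by (rule nn_integral_multc) (rule ennr_meas[OF m])
    also have "\<dots> = 1" using r rp i by (simp add: ennreal_mult[symmetric])
    finally have pint: "(\<integral>\<^sup>+ x. ennreal (p x) \<partial>?M) = 1" .
    show ?thesis unfolding is_bernoulli_def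
      apply (rule exI[of _ r], rule exI[of _ p])
      using r pm pint van m0 rp by (auto simp: p_def mp_def r_def)
  next
    case True
    obtain r0 p0 where rp0: "p0 \<in> borel_measurable lborel" "\<forall>x\<in>Xs. 0 \<le> p0 x"
        "(\<integral>\<^sup>+ x. ennreal (p0 x) \<partial>?M) = 1"
      using b0 unfolding is_bernoulli_def by blast
    have "m {} = 1" using True by (simp add: r_def)
    hence "\<forall>x\<in>Xs. m {x} = 0" using deg by blast
    then show ?thesis unfolding is_bernoulli_def
      apply (rule_tac exI[of _ 0], rule_tac exI[of _ p0])
      using rp0 van \<open>m {} = 1\<close> by auto
  qed
qed



lemma ereal_sum_mult:
  assumes "\<And>k. k \<in> K \<Longrightarrow> 0 \<le> x k"
  shows "ereal (\<Sum>k\<in>K. x k) * c = (\<Sum>k\<in>K. ereal (x k) * c)"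
proof -
  have "ereal (\<Sum>k\<in>K. x k) * c = (\<Sum>k\<in>K. ereal (x k)) * c" by simp
  also have "\<dots> = (\<Sum>k\<in>K. ereal (x k) * c)"
    by (rule sum_ereal_left_distrib) (use assms in auto)
  finally show ?thesis .
qed

lemma ereal_mult_sum:
  assumes "0 \<le> x"
  shows "ereal x * (\<Sum>k\<in>K. c k) = (\<Sum>k\<in>K. ereal x * c k)"
  using sum_distrib_right_ereal[OF assms, of c K] by (simp add: mult.commute)

lemma finite_perms: "finite (perms N)"
  unfolding perms_def by (rule finite_permutations) simp

lemma perms_lt: "\<pi> \<in> perms N \<Longrightarrow> i < N \<Longrightarrow> \<pi> i < N"
  unfolding perms_def using permutes_in_image[of \<pi> "{..<N}" i] by auto

lemma reg_i:
  fixes c :: "'h \<Rightarrow> nat \<Rightarrow> ereal"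
  assumes A: "finite A" "\<forall>a\<in>A. length a = N" and w: "\<forall>a\<in>A. 0 \<le> w a"
    and q: "valid_q N A q" and i: "i < N"
  shows "(\<Sum>a\<in>A. \<Sum>\<pi>\<in>perms N. ereal (w a * q a \<pi>) * c (a!i) (\<pi> i))
    = (\<Sum>h\<in>(\<Union>a\<in>A. set a). \<Sum>j<N. ereal (\<Sum>a\<in>{a\<in>A. a ! i = h}. w a * (\<Sum>\<pi>\<in>{\<pi>\<in>perms N. \<pi> i = j}. q a \<pi>)) * c h j)"
proof -
  let ?U = "\<Union>a\<in>A. set a"
  have qn: "\<And>a \<pi>. a \<in> A \<Longrightarrow> \<pi> \<in> perms N \<Longrightarrow> 0 \<le> q a \<pi>" using q by (auto simp: valid_q_def)
  have step1: "(\<Sum>\<pi>\<in>perms N. ereal (w a * q a \<pi>) * c (a!i) (\<pi> i))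
      = (\<Sum>j<N. ereal (w a * (\<Sum>\<pi>\<in>{\<pi>\<in>perms N. \<pi> i = j}. q a \<pi>)) * c (a!i) j)" if a: "a \<in> A" for a
  proof -
    have "(\<Sum>\<pi>\<in>perms N. ereal (w a * q a \<pi>) * c (a!i) (\<pi> i))
        = (\<Sum>j<N. \<Sum>\<pi>\<in>{\<pi>\<in>perms N. \<pi> i = j}. ereal (w a * q a \<pi>) * c (a!i) (\<pi> i))"
      by (rule sum.group[symmetric]) (use finite_perms perms_lt i in auto)
    also have "\<dots> = (\<Sum>j<N. \<Sum>\<pi>\<in>{\<pi>\<in>perms N. \<pi> i = j}. ereal (w a * q a \<pi>) * c (a!i) j)"
      by (intro sum.cong refl) auto
    also have "\<dots> = (\<Sum>j<N. ereal (w a * (\<Sum>\<pi>\<in>{\<pi>\<in>perms N. \<pi> i = j}. q a \<pi>)) * c (a!i) j)"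
    proof (intro sum.cong refl)
      fix j
      have "ereal (w a * (\<Sum>\<pi>\<in>{\<pi>\<in>perms N. \<pi> i = j}. q a \<pi>)) * c (a!i) j
          = ereal (\<Sum>\<pi>\<in>{\<pi>\<in>perms N. \<pi> i = j}. w a * q a \<pi>) * c (a!i) j"
        by (simp add: sum_distrib_left)
      also have "\<dots> = (\<Sum>\<pi>\<in>{\<pi>\<in>perms N. \<pi> i = j}. ereal (w a * q a \<pi>) * c (a!i) j)"
        by (rule ereal_sum_mult) (use w a qn in auto)
      finally show "(\<Sum>\<pi>\<in>{\<pi>\<in>perms N. \<pi> i = j}. ereal (w a * q a \<pi>) * c (a!i) j)
          = ereal (w a * (\<Sum>\<pi>\<in>{\<pi>\<in>perms N. \<pi> i = j}. q a \<pi>)) * c (a!i) j" by simp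
    qed
    finally show ?thesis .
  qed
  have "(\<Sum>a\<in>A. \<Sum>\<pi>\<in>perms N. ereal (w a * q a \<pi>) * c (a!i) (\<pi> i))
      = (\<Sum>a\<in>A. \<Sum>j<N. ereal (w a * (\<Sum>\<pi>\<in>{\<pi>\<in>perms N. \<pi> i = j}. q a \<pi>)) * c (a!i) j)"
    using step1 by (rule sum.cong[OF refl])
  also have "\<dots> = (\<Sum>h\<in>?U. \<Sum>a\<in>{a\<in>A. a ! i = h}. \<Sum>j<N. ereal (w a * (\<Sum>\<pi>\<in>{\<pi>\<in>perms N. \<pi> i = j}. q a \<pi>)) * c (a!i) j)"
    by (rule sum.group[symmetric]) (use A i in \<open>auto intro!: finite_UN_I\<close>)
  also have "\<dots> = (\<Sum>h\<in>?U. \<Sum>a\<in>{a\<in>A. a ! i = h}. \<Sum>j<N. ereal (w a * (\<Sum>\<pi>\<in>{\<pi>\<in>perms N. \<pi> i = j}. q a \<pi>)) * c h j)"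
    by (intro sum.cong refl) auto
  also have "\<dots> = (\<Sum>h\<in>?U. \<Sum>j<N. \<Sum>a\<in>{a\<in>A. a ! i = h}. ereal (w a * (\<Sum>\<pi>\<in>{\<pi>\<in>perms N. \<pi> i = j}. q a \<pi>)) * c h j)"
    by (intro sum.cong refl sum.swap)
  also have "\<dots> = (\<Sum>h\<in>?U. \<Sum>j<N. ereal (\<Sum>a\<in>{a\<in>A. a ! i = h}. w a * (\<Sum>\<pi>\<in>{\<pi>\<in>perms N. \<pi> i = j}. q a \<pi>)) * c h j)"
    by (intro sum.cong refl ereal_sum_mult[symmetric] mult_nonneg_nonneg sum_nonneg) (use w qn in auto)
  finally show ?thesis .
qed

lemma regroup:
  fixes c :: "'h \<Rightarrow> nat \<Rightarrow> ereal"
  assumes A: "finite A" "\<forall>a\<in>A. length a = N" and w: "\<forall>a\<in>A. 0 \<le> w a"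
    and q: "valid_q N A q"
  shows "(\<Sum>a\<in>A. \<Sum>\<pi>\<in>perms N. ereal (w a * q a \<pi>) * (\<Sum>i<N. c (a!i) (\<pi> i)))
    = (\<Sum>j<N. \<Sum>h\<in>(\<Union>a\<in>A. set a). ereal (induced_q N A w q h j) * c h j)"
proof -
  let ?U = "\<Union>a\<in>A. set a"
  let ?X = "\<lambda>i h j. (\<Sum>a\<in>{a\<in>A. a ! i = h}. w a * (\<Sum>\<pi>\<in>{\<pi>\<in>perms N. \<pi> i = j}. q a \<pi>))"
  have qn: "\<And>a \<pi>. a \<in> A \<Longrightarrow> \<pi> \<in> perms N \<Longrightarrow> 0 \<le> q a \<pi>" using q by (auto simp: valid_q_def)
  have Xn: "0 \<le> ?X i h j" for i h j using w qn by (auto intro!: sum_nonneg mult_nonneg_nonneg)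
  have "(\<Sum>a\<in>A. \<Sum>\<pi>\<in>perms N. ereal (w a * q a \<pi>) * (\<Sum>i<N. c (a!i) (\<pi> i)))
      = (\<Sum>a\<in>A. \<Sum>\<pi>\<in>perms N. \<Sum>i<N. ereal (w a * q a \<pi>) * c (a!i) (\<pi> i))"
    by (intro sum.cong refl ereal_mult_sum mult_nonneg_nonneg) (use w qn in auto)
  also have "\<dots> = (\<Sum>a\<in>A. \<Sum>i<N. \<Sum>\<pi>\<in>perms N. ereal (w a * q a \<pi>) * c (a!i) (\<pi> i))"
    by (intro sum.cong refl sum.swap)
  also have "\<dots> = (\<Sum>i<N. \<Sum>a\<in>A. \<Sum>\<pi>\<in>perms N. ereal (w a * q a \<pi>) * c (a!i) (\<pi> i))"
    by (rule sum.swap)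
  also have "\<dots> = (\<Sum>i<N. \<Sum>h\<in>?U. \<Sum>j<N. ereal (?X i h j) * c h j)"
    by (intro sum.cong refl reg_i[OF A w q]) auto
  also have "\<dots> = (\<Sum>i<N. \<Sum>j<N. \<Sum>h\<in>?U. ereal (?X i h j) * c h j)"
    by (intro sum.cong refl sum.swap)
  also have "\<dots> = (\<Sum>j<N. \<Sum>i<N. \<Sum>h\<in>?U. ereal (?X i h j) * c h j)"
    by (rule sum.swap)
  also have "\<dots> = (\<Sum>j<N. \<Sum>h\<in>?U. \<Sum>i<N. ereal (?X i h j) * c h j)"
    by (intro sum.cong refl sum.swap)
  also have "\<dots> = (\<Sum>j<N. \<Sum>h\<in>?U. ereal (\<Sum>i<N. ?X i h j) * c h j)"
    by (intro sum.cong refl ereal_sum_mult[symmetric] Xn)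
  also have "\<dots> = (\<Sum>j<N. \<Sum>h\<in>?U. ereal (induced_q N A w q h j) * c h j)"
    by (simp add: induced_q_def)
  finally show ?thesis .
qed

lemma perm_unique_sum:
  assumes p: "\<pi> \<in> perms N" and j: "j < N"
  shows "(\<Sum>i<N. if \<pi> i = j then x else 0) = (x::real)"
proof -
  have pp: "\<pi> permutes {..<N}" using p by (simp add: perms_def)
  have e: "\<And>i. (\<pi> i = j) = (inv \<pi> j = i)" using permutes_inv_eq[OF pp] by metis
  have "inv \<pi> j \<in> {..<N}" using permutes_in_image[OF permutes_inv[OF pp], of j] j by simp
  then show ?thesis by (simp add: e)
qed

lemma col_sum:
  assumes A: "finite A" "\<forall>a\<in>A. length a = N" and wsum: "(\<Sum>a\<in>A. w a) = 1"
    and q: "valid_q N A q" and j: "j < N"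
  shows "(\<Sum>h\<in>(\<Union>a\<in>A. set a). induced_q N A w q h j) = 1"
proof -
  let ?U = "\<Union>a\<in>A. set a"
  let ?S = "\<lambda>a i. (\<Sum>\<pi>\<in>{\<pi>\<in>perms N. \<pi> i = j}. q a \<pi>)"
  have "(\<Sum>h\<in>?U. induced_q N A w q h j) = (\<Sum>i<N. \<Sum>h\<in>?U. \<Sum>a\<in>{a\<in>A. a ! i = h}. w a * ?S a i)"
    unfolding induced_q_def by (rule sum.swap)
  also have "\<dots> = (\<Sum>i<N. \<Sum>a\<in>A. w a * ?S a i)"
    by (intro sum.cong refl sum.group) (use A in \<open>auto intro!: finite_UN_I\<close>)
  also have "\<dots> = (\<Sum>a\<in>A. w a * (\<Sum>i<N. ?S a i))"
    by (subst sum.swap) (simp add: sum_distrib_left)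
  also have "\<dots> = (\<Sum>a\<in>A. w a)"
  proof (intro sum.cong refl)
    fix a assume a: "a \<in> A"
    have "(\<Sum>i<N. ?S a i) = (\<Sum>i<N. \<Sum>\<pi>\<in>perms N. if \<pi> i = j then q a \<pi> else 0)"
      by (rule sum.cong[OF refl], rule sum.inter_filter[OF finite_perms])
    also have "\<dots> = (\<Sum>\<pi>\<in>perms N. \<Sum>i<N. if \<pi> i = j then q a \<pi> else 0)"
      by (rule sum.swap)
    also have "\<dots> = (\<Sum>\<pi>\<in>perms N. q a \<pi>)"
      by (intro sum.cong refl perm_unique_sum j)
    also have "\<dots> = 1" using q a by (simp add: valid_q_def)
    finally show "w a * (\<Sum>i<N. ?S a i) = w a" by simp
  qed
  finally show ?thesis using wsum by simp
qed

lemma induced_nonneg: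
  assumes w: "\<forall>a\<in>A. 0 \<le> w a" and q: "valid_q N A q"
  shows "0 \<le> induced_q N A w q h j"
  unfolding induced_q_def using w q
  by (auto simp: valid_q_def intro!: sum_nonneg mult_nonneg_nonneg)



lemma per_q:
  fixes Xs :: "'a::euclidean_space set"
    and N :: nat
    and H :: "'h set"
    and f :: "'h \<Rightarrow> 'a set \<Rightarrow> real"
    and A :: "'h list set"
    and w :: "'h list \<Rightarrow> real"
  assumes Xs_meas: "Xs \<in> sets lborel"
    and f_bern: "\<forall>h\<in>H. is_bernoulli Xs (f h)"
    and f_entropy_finite: "\<forall>h\<in>H. \<bar>cross_ent Xs (f h) (f h)\<bar> \<noteq> \<infinity>"
    and A_fin: "finite A"
    and A_sub: "\<forall>a\<in>A. length a = N \<and> set a \<subseteq> H"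
    and w_nonneg: "\<forall>a\<in>A. 0 \<le> w a"
    and w_sum: "(\<Sum>a\<in>A. w a) = 1"
    and q: "valid_q N A q"
  shows "\<forall>g. (\<forall>j<N. is_bernoulli Xs (g j)) \<longrightarrow> mix_obj Xs N A f (induced_q N A w q) \<le> J0 Xs N A w f g q"
    and "\<exists>g. (\<forall>j<N. is_bernoulli Xs (g j)) \<and> J0 Xs N A w f g q = mix_obj Xs N A f (induced_q N A w q)"
proof -
  define U where "U = (\<Union>a\<in>A. set a)"
  have Ufin: "finite U" using A_fin by (auto simp: U_def)
  have UH: "U \<subseteq> H" using A_sub by (auto simp: U_def)
  have Alen: "\<forall>a\<in>A. length a = N" using A_sub by auto
  have fg: "\<And>h. h \<in> H \<Longrightarrow> good Xs (f h)" using f_bern bern_good[OF Xs_meas] by blast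
  have fmass: "\<And>h. h \<in> H \<Longrightarrow> S0 Xs (\<lambda>X. ennreal (f h X)) = 1" using f_bern bern_mass[OF Xs_meas] by blast
  have fpos: "S0 Xs (posp (f h) (f h)) < top" if h: "h \<in> H" for h
  proof (rule ccontr)
    assume "\<not> S0 Xs (posp (f h) (f h)) < top"
    hence "S0 Xs (posp (f h) (f h)) = top" using top.not_eq_extremum by blast
    hence "cross_ent Xs (f h) (f h) = -\<infinity>" using CE_repr[OF Xs_meas fg[OF h] fg[OF h]] by simp
    thus False using f_entropy_finite h by auto
  qed
  have fposg: "S0 Xs (posp (f h) g) < top" if "h \<in> H" "good Xs g" "S0 Xs (\<lambda>X. ennreal (g X)) < top" for h g
    using I1[OF fg[OF that(1)] that(2) fpos[OF that(1)] that(3)] .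
  define Q where "Q = induced_q N A w q"
  have Qn: "\<And>h j. 0 \<le> Q h j" unfolding Q_def by (rule induced_nonneg[OF w_nonneg q])
  have Qs: "\<And>j. j < N \<Longrightarrow> (\<Sum>h\<in>U. Q h j) = 1"
    unfolding Q_def U_def by (rule col_sum[OF A_fin Alen w_sum q])
  define m where "m = (\<lambda>j X. \<Sum>h\<in>U. Q h j * f h X)"
  have mgood: "\<And>j. good Xs (m j)" unfolding m_def
    by (rule good_comb[OF Ufin]) (use Qn UH fg in auto)
  have mmass: "S0 Xs (\<lambda>X. ennreal (m j X)) = 1" if j: "j < N" for j
  proof -
    have "S0 Xs (\<lambda>X. ennreal (m j X)) = (\<Sum>h\<in>U. ennreal (Q h j) * S0 Xs (\<lambda>X. ennreal (f h X)))"
      unfolding m_def by (rule comb_mass[OF Ufin]) (use Qn UH fg in auto)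
    also have "\<dots> = (\<Sum>h\<in>U. ennreal (Q h j))" using UH fmass by (intro sum.cong refl) auto
    also have "\<dots> = 1" using Qs[OF j] Qn by simp
    finally show ?thesis .
  qed
  have J0eq: "J0 Xs N A w f g q = (\<Sum>j<N. cross_ent Xs (m j) (g j))"
    if g: "\<And>j. j < N \<Longrightarrow> good Xs (g j)" "\<And>j. j < N \<Longrightarrow> S0 Xs (\<lambda>X. ennreal (g j X)) < top" for g
  proof -
    have "J0 Xs N A w f g q = (\<Sum>j<N. \<Sum>h\<in>U. ereal (Q h j) * cross_ent Xs (f h) (g j))"
      unfolding J0_def Q_def U_def by (rule regroup[OF A_fin Alen w_nonneg q])
    also have "\<dots> = (\<Sum>j<N. cross_ent Xs (m j) (g j))"
    proof (intro sum.cong refl)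
      fix j assume "j \<in> {..<N}"
      hence j: "j < N" by simp
      show "(\<Sum>h\<in>U. ereal (Q h j) * cross_ent Xs (f h) (g j)) = cross_ent Xs (m j) (g j)"
        unfolding m_def
        by (rule I2(1)[OF Xs_meas Ufin, symmetric]) (use Qn UH fg g j fposg in auto)
    qed
    finally show ?thesis .
  qed
  have mixeq: "mix_obj Xs N A f Q = (\<Sum>j<N. cross_ent Xs (m j) (m j))"
    unfolding mix_obj_def m_def U_def Let_def ..
  have mmfin: "S0 Xs (posp (m j) (m j)) < top" if j: "j < N" for j
    unfolding m_def
    by (rule I2(2)[OF Xs_meas Ufin]) (use Qn UH fg mgood mmass[OF j] j fposg[of _ "m j"] in \<open>auto simp: m_def\<close>)
  show "\<forall>g. (\<forall>j<N. is_bernoulli Xs (g j)) \<longrightarrow> mix_obj Xs N A f (induced_q N A w q) \<le> J0 Xs N A w f g q"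
  proof (intro allI impI)
    fix g assume gb: "\<forall>j<N. is_bernoulli Xs (g j)"
    have gg: "\<And>j. j < N \<Longrightarrow> good Xs (g j)" using gb bern_good[OF Xs_meas] by blast
    have gm: "\<And>j. j < N \<Longrightarrow> S0 Xs (\<lambda>X. ennreal (g j X)) = 1" using gb bern_mass[OF Xs_meas] by blast
    have "mix_obj Xs N A f Q = (\<Sum>j<N. cross_ent Xs (m j) (m j))" by (rule mixeq)
    also have "\<dots> \<le> (\<Sum>j<N. cross_ent Xs (m j) (g j))"
    proof (rule sum_mono)
      fix j assume "j \<in> {..<N}"
      hence j: "j < N" by simp
      have a: "S0 Xs (posp (m j) (g j)) < top"
        unfolding m_def
        by (rule I2(2)[OF Xs_meas Ufin]) (use Qn UH fg gg[OF j] gm[OF j] fposg in auto)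
      show "cross_ent Xs (m j) (m j) \<le> cross_ent Xs (m j) (g j)"
        by (rule I3[OF Xs_meas mgood gg[OF j]]) (use mmass[OF j] gm[OF j] a mmfin[OF j] in auto)
    qed
    also have "\<dots> = J0 Xs N A w f g q" by (rule J0eq[symmetric]) (use gg gm in auto)
    finally show "mix_obj Xs N A f (induced_q N A w q) \<le> J0 Xs N A w f g q" by (simp add: Q_def)
  qed
  have mbern: "is_bernoulli Xs (m j)" if j: "j < N" for j
  proof -
    have "A \<noteq> {}" using w_sum by auto
    then obtain a where a: "a \<in> A" by blast
    hence "a ! j \<in> U" using Alen j unfolding U_def by (metis UN_I nth_mem)
    hence b0: "is_bernoulli Xs (f (a ! j))" using UH f_bern by auto
    have deg: "\<forall>x\<in>Xs. m j {x} = 0" if m1: "m j {} = 1"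
    proof
      fix x assume x: "x \<in> Xs"
      have le1: "\<And>h. h \<in> U \<Longrightarrow> f h {} \<le> 1" using UH f_bern bern_props(1) by blast
      have "(\<Sum>h\<in>U. Q h j * (1 - f h {})) = (\<Sum>h\<in>U. Q h j) - m j {}"
        by (simp add: m_def algebra_simps sum_subtractf sum_distrib_left)
      also have "\<dots> = 0" using Qs[OF j] m1 by simp
      finally have z: "(\<Sum>h\<in>U. Q h j * (1 - f h {})) = 0" .
      have "\<forall>h\<in>U. Q h j * (1 - f h {}) = 0"
        using sum_nonneg_eq_0_iff[OF Ufin, of "\<lambda>h. Q h j * (1 - f h {})"] z Qn le1 by auto
      hence "\<forall>h\<in>U. Q h j * f h {x} = 0"
        using UH f_bern bern_props(2)[of Xs _ x] x by (metis eq_iff_diff_eq_0 mult_eq_0_iff mult_zero_right subsetD)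
      then show "m j {x} = 0" unfolding m_def by (intro sum.neutral) auto
    qed
    show ?thesis by (rule good_bern[OF Xs_meas mgood mmass[OF j] deg b0])
  qed
  show "\<exists>g. (\<forall>j<N. is_bernoulli Xs (g j)) \<and> J0 Xs N A w f g q = mix_obj Xs N A f (induced_q N A w q)"
  proof (intro exI conjI)
    show "\<forall>j<N. is_bernoulli Xs (m j)" using mbern by blast
    have "J0 Xs N A w f m q = (\<Sum>j<N. cross_ent Xs (m j) (m j))"
      by (rule J0eq) (use mgood mmass in auto)
    then show "J0 Xs N A w f m q = mix_obj Xs N A f (induced_q N A w q)"
      using mixeq by (simp add: Q_def)
  qed
qed



theorem theorem6:
  fixes Xs :: "'a::euclidean_space set"
    and N :: nat
    and H :: "'h set"
    and f :: "'h \<Rightarrow> 'a set \<Rightarrow> real"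
    and A :: "'h list set"
    and w :: "'h list \<Rightarrow> real"
  assumes Xs_meas: "Xs \<in> sets lborel"
    and f_bern: "\<forall>h\<in>H. is_bernoulli Xs (f h)"
    and f_entropy_finite: "\<forall>h\<in>H. \<bar>cross_ent Xs (f h) (f h)\<bar> \<noteq> \<infinity>"
    and A_fin: "finite A"
    and A_sub: "\<forall>a\<in>A. length a = N \<and> set a \<subseteq> H"
    and w_nonneg: "\<forall>a\<in>A. 0 \<le> w a"
    and w_sum: "(\<Sum>a\<in>A. w a) = 1"
  shows "(\<forall>q. valid_q N A q \<longrightarrow>
            (INF g\<in>{g. \<forall>j<N. is_bernoulli Xs (g j)}. J0 Xs N A w f g q)
              = mix_obj Xs N A f (induced_q N A w q)
          \<and> (\<exists>g. (\<forall>j<N. is_bernoulli Xs (g j))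
                 \<and> J0 Xs N A w f g q = mix_obj Xs N A f (induced_q N A w q)))
       \<and> (INF gq\<in>{(g, q). (\<forall>j<N. is_bernoulli Xs (g j)) \<and> valid_q N A q}.
             J0 Xs N A w f (fst gq) (snd gq))
         = (INF Q\<in>P_set N A w. mix_obj Xs N A f Q)"
proof -
  note pq = per_q[OF Xs_meas f_bern f_entropy_finite A_fin A_sub w_nonneg w_sum]
  have part1: "(INF g\<in>{g. \<forall>j<N. is_bernoulli Xs (g j)}. J0 Xs N A w f g q)
              = mix_obj Xs N A f (induced_q N A w q)" if q: "valid_q N A q" for q
  proof (rule antisym)
    obtain g0 where g0: "\<forall>j<N. is_bernoulli Xs (g0 j)" "J0 Xs N A w f g0 q = mix_obj Xs N A f (induced_q N A w q)"
      using pq(2)[OF q] by blast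
    have "(INF g\<in>{g. \<forall>j<N. is_bernoulli Xs (g j)}. J0 Xs N A w f g q) \<le> J0 Xs N A w f g0 q"
      by (rule INF_lower) (use g0 in simp)
    then show "(INF g\<in>{g. \<forall>j<N. is_bernoulli Xs (g j)}. J0 Xs N A w f g q) \<le> mix_obj Xs N A f (induced_q N A w q)"
      using g0 by simp
    show "mix_obj Xs N A f (induced_q N A w q) \<le> (INF g\<in>{g. \<forall>j<N. is_bernoulli Xs (g j)}. J0 Xs N A w f g q)"
      by (rule INF_greatest) (use pq(1)[OF q] in auto)
  qed
  have part2: "(INF gq\<in>{(g, q). (\<forall>j<N. is_bernoulli Xs (g j)) \<and> valid_q N A q}.
             J0 Xs N A w f (fst gq) (snd gq))
         = (INF Q\<in>P_set N A w. mix_obj Xs N A f Q)"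
  proof (rule antisym)
    show "(INF gq\<in>{(g, q). (\<forall>j<N. is_bernoulli Xs (g j)) \<and> valid_q N A q}. J0 Xs N A w f (fst gq) (snd gq))
        \<le> (INF Q\<in>P_set N A w. mix_obj Xs N A f Q)"
    proof (rule INF_greatest)
      fix Q assume "Q \<in> P_set N A w"
      then obtain q where q: "valid_q N A q" "Q = induced_q N A w q" by (auto simp: P_set_def)
      obtain g0 where g0: "\<forall>j<N. is_bernoulli Xs (g0 j)" "J0 Xs N A w f g0 q = mix_obj Xs N A f (induced_q N A w q)"
        using pq(2)[OF q(1)] by blast
      have "(INF gq\<in>{(g, q). (\<forall>j<N. is_bernoulli Xs (g j)) \<and> valid_q N A q}. J0 Xs N A w f (fst gq) (snd gq))
          \<le> J0 Xs N A w f (fst (g0, q)) (snd (g0, q))"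
        by (rule INF_lower) (use g0 q in simp)
      then show "(INF gq\<in>{(g, q). (\<forall>j<N. is_bernoulli Xs (g j)) \<and> valid_q N A q}. J0 Xs N A w f (fst gq) (snd gq))
          \<le> mix_obj Xs N A f Q" using g0 q by simp
    qed
    show "(INF Q\<in>P_set N A w. mix_obj Xs N A f Q)
        \<le> (INF gq\<in>{(g, q). (\<forall>j<N. is_bernoulli Xs (g j)) \<and> valid_q N A q}. J0 Xs N A w f (fst gq) (snd gq))"
    proof (rule INF_greatest)
      fix gq assume "gq \<in> {(g, q). (\<forall>j<N. is_bernoulli Xs (g j)) \<and> valid_q N A q}"
      then obtain g q where gq: "gq = (g, q)" "\<forall>j<N. is_bernoulli Xs (g j)" "valid_q N A q" by auto
      have "(INF Q\<in>P_set N A w. mix_obj Xs N A f Q) \<le> mix_obj Xs N A f (induced_q N A w q)"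
        by (rule INF_lower) (use gq in \<open>auto simp: P_set_def\<close>)
      also have "\<dots> \<le> J0 Xs N A w f g q" using pq(1)[OF gq(3)] gq(2) by blast
      finally show "(INF Q\<in>P_set N A w. mix_obj Xs N A f Q) \<le> J0 Xs N A w f (fst gq) (snd gq)"
        using gq by simp
    qed
  qed
  show ?thesis using part1 part2 pq(2) by blast
qed

end
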